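(* Let $A_0=(a_1|a_2)\in\mathbb{Z}[i]^{4\times2}$ be a $2$-icube of norm $\lambda$ with $a_1$ primitive. Then $d_2(A_0)$ divides $\lambda$ in $\mathbb{Z}[i]$.
   Context: A $2$-icube of norm $\lambda>0$ is $(a_1|a_2)$ with $a_1^*a_1=a_2^*a_2=\lambda$, $a_1^*a_2=0$. A vector is primitive if its entries have no common non-unit divisor. $d_2(A_0)$ is the gcd of the $2\times2$ minors of $A_0$. *)

theory Defs
  imports Complex_Main
begin

definition gauss_int :: "complex set" where
  "gauss_int = {z. Re z \<in> \<int> \<and> Im z \<in> \<int>}"

definition gdvd :: "complex \<Rightarrow> complex \<Rightarrow> bool" where
  "gdvd a b \<longleftrightarrow> (\<exists>c\<in>gauss_int. b = a * c)"

definition gunit :: "complex \<Rightarrow> bool" where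
  "gunit u \<longleftrightarrow> u \<in> gauss_int \<and> gdvd u 1"

definition gprimitive :: "nat \<Rightarrow> (nat \<Rightarrow> complex) \<Rightarrow> bool" where
  "gprimitive n v \<longleftrightarrow> (\<forall>d\<in>gauss_int. (\<forall>k<n. gdvd d (v k)) \<longrightarrow> gunit d)"

definition is_ggcd :: "complex \<Rightarrow> complex set \<Rightarrow> bool" where
  "is_ggcd g S \<longleftrightarrow> g \<in> gauss_int \<and> (\<forall>s\<in>S. gdvd g s) \<and>
     (\<forall>d\<in>gauss_int. (\<forall>s\<in>S. gdvd d s) \<longrightarrow> gdvd d g)"

definition minors2 :: "nat \<Rightarrow> (nat \<Rightarrow> complex) \<Rightarrow> (nat \<Rightarrow> complex) \<Rightarrow> complex set" where
  "minors2 n a1 a2 = {a1 i * a2 j - a1 j * a2 i | i j. i < j \<and> j < n}"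

definition cinner :: "nat \<Rightarrow> (nat \<Rightarrow> complex) \<Rightarrow> (nat \<Rightarrow> complex) \<Rightarrow> complex" where
  "cinner n a b = (\<Sum>k<n. cnj (a k) * b k)"

definition icube2 :: "nat \<Rightarrow> (nat \<Rightarrow> complex) \<Rightarrow> (nat \<Rightarrow> complex) \<Rightarrow> real \<Rightarrow> bool" where
  "icube2 n a1 a2 lam \<longleftrightarrow> lam > 0 \<and> (\<forall>k<n. a1 k \<in> gauss_int \<and> a2 k \<in> gauss_int) \<and>
     cinner n a1 a1 = complex_of_real lam \<and> cinner n a2 a2 = complex_of_real lam \<and>
     cinner n a1 a2 = 0"

end

theory Submission
  imports Defs
begin

lemma gi_iff: "z \<in> gauss_int \<longleftrightarrow> Re z \<in> \<int> \<and> Im z \<in> \<int>"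
  by (simp add: gauss_int_def)

lemma gi_add: "a \<in> gauss_int \<Longrightarrow> b \<in> gauss_int \<Longrightarrow> a + b \<in> gauss_int"
  by (simp add: gi_iff)
lemma gi_diff: "a \<in> gauss_int \<Longrightarrow> b \<in> gauss_int \<Longrightarrow> a - b \<in> gauss_int"
  by (simp add: gi_iff)
lemma gi_uminus: "a \<in> gauss_int \<Longrightarrow> - a \<in> gauss_int"
  by (simp add: gi_iff)
lemma gi_mult: "a \<in> gauss_int \<Longrightarrow> b \<in> gauss_int \<Longrightarrow> a * b \<in> gauss_int"
  by (simp add: gi_iff)
lemma gi_cnj: "a \<in> gauss_int \<Longrightarrow> cnj a \<in> gauss_int"
  by (simp add: gi_iff)
lemma gi_0: "0 \<in> gauss_int" and gi_1: "1 \<in> gauss_int"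
  by (simp_all add: gi_iff)

lemma gdvd_add: "gdvd d a \<Longrightarrow> gdvd d b \<Longrightarrow> gdvd d (a + b)"
  unfolding gdvd_def by (metis distrib_left gi_add)
lemma gdvd_diff: "gdvd d a \<Longrightarrow> gdvd d b \<Longrightarrow> gdvd d (a - b)"
  unfolding gdvd_def by (metis right_diff_distrib gi_diff)
lemma gdvd_mult: "gdvd d a \<Longrightarrow> c \<in> gauss_int \<Longrightarrow> gdvd d (c * a)"
  unfolding gdvd_def by (metis mult.left_commute gi_mult)
lemma gdvd_0: "gdvd d 0"
  unfolding gdvd_def using gi_0 by force
lemma gdvd_uminus: "gdvd d a \<Longrightarrow> gdvd d (- a)"
  using gdvd_diff[OF gdvd_0] by fastforce

lemma gdvd_sum: "(\<And>i. i \<in> A \<Longrightarrow> gdvd d (f i)) \<Longrightarrow> gdvd d (sum f A)"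
  by (induction A rule: infinite_finite_induct) (auto simp: gdvd_0 gdvd_add)

lemma sq_le: "\<bar>x::real\<bar> \<le> 1/2 \<Longrightarrow> x^2 \<le> 1/4"
proof -
  assume h: "\<bar>x\<bar> \<le> 1/2"
  have "\<bar>x\<bar> * \<bar>x\<bar> \<le> 1/2 * (1/2)" by (rule mult_mono[OF h h]) auto
  thus ?thesis by (simp add: power2_eq_square abs_mult_self_eq)
qed

definition gn :: "complex \<Rightarrow> nat" where
  "gn z = nat (\<lfloor>Re z\<rfloor>^2 + \<lfloor>Im z\<rfloor>^2)"

lemma gn_cmod: assumes "z \<in> gauss_int" shows "real (gn z) = (cmod z)^2"
proof -
  from assms obtain a b where a: "Re z = of_int a" and b: "Im z = of_int b"
    unfolding gi_iff by (auto elim!: Ints_cases)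
  show ?thesis unfolding gn_def a b cmod_power2 by simp
qed

lemma gdiv:
  assumes "a \<in> gauss_int" "b \<in> gauss_int" "b \<noteq> 0"
  shows "\<exists>q\<in>gauss_int. cmod (a - q * b) < cmod b"
proof -
  define w where "w = a / b"
  define q where "q = Complex (of_int (round (Re w))) (of_int (round (Im w)))"
  have q: "q \<in> gauss_int" by (simp add: q_def gi_iff)
  have r1: "\<bar>Re (w - q)\<bar> \<le> 1/2" using of_int_round_abs_le[of "Re w"] by (simp add: q_def abs_minus_commute)
  have r2: "\<bar>Im (w - q)\<bar> \<le> 1/2" using of_int_round_abs_le[of "Im w"] by (simp add: q_def abs_minus_commute)
  have "(Re (w - q))^2 \<le> 1/4" using r1
    by (rule sq_le)
  moreover have "(Im (w - q))^2 \<le> 1/4" using r2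
    by (rule sq_le)
  ultimately have "(cmod (w - q))^2 < 1" unfolding cmod_power2 by linarith
  hence c: "cmod (w - q) < 1" by (simp add: power_less_one_iff)
  have "a - q * b = (w - q) * b" using assms(3) by (simp add: w_def field_simps)
  hence "cmod (a - q * b) = cmod (w - q) * cmod b" by (simp add: norm_mult)
  also have "\<dots> < cmod b" using c assms(3) by simp
  finally show ?thesis using q by blast
qed


lemma ideal_unit:
  assumes Ssub: "S \<subseteq> gauss_int"
    and Sdiff: "\<And>x y. x \<in> S \<Longrightarrow> y \<in> S \<Longrightarrow> x - y \<in> S"
    and Smult: "\<And>c x. c \<in> gauss_int \<Longrightarrow> x \<in> S \<Longrightarrow> c * x \<in> S"
    and v: "\<forall>k<n. v k \<in> S" "k0 < n" "v k0 \<noteq> 0" "gprimitive n v"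
  shows "\<exists>u\<in>S. gunit u"
proof -
  obtain g where g: "g \<in> S \<and> g \<noteq> 0" and gmin: "\<forall>y. y \<in> S \<and> y \<noteq> 0 \<longrightarrow> gn g \<le> gn y"
    using ex_has_least_nat[of "\<lambda>y. y \<in> S \<and> y \<noteq> 0" "v k0" gn] v by blast
  have gG: "g \<in> gauss_int" using g Ssub by blast
  have dv: "gdvd g (v k)" if k: "k < n" for k
  proof -
    have vk: "v k \<in> gauss_int" using v k Ssub by blast
    obtain q where q: "q \<in> gauss_int" "cmod (v k - q * g) < cmod g"
      using gdiv[OF vk gG] g by blast
    have rS: "v k - q * g \<in> S" using Sdiff[OF _ Smult[OF q(1)]] v k g by blast
    have r0: "v k - q * g = 0"
    proof (rule ccontr)
      assume "v k - q * g \<noteq> 0"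
      with gmin rS have le: "gn g \<le> gn (v k - q * g)" by blast
      have "(cmod (v k - q * g))^2 < (cmod g)^2"
        using q(2) by (simp add: power_strict_mono)
      hence "real (gn (v k - q * g)) < real (gn g)"
        using gn_cmod[OF gG] gn_cmod rS Ssub by auto
      with le show False by simp
    qed
    thus ?thesis unfolding gdvd_def using q(1) by (intro bexI[of _ q]) (auto simp: mult.commute)
  qed
  have "gunit g" using v(4) gG dv unfolding gprimitive_def by blast
  thus ?thesis using g by blast
qed

theorem mainTheorem19:
  fixes a1 a2 :: "nat \<Rightarrow> complex" and lam :: real and d2 :: complex
  assumes "icube2 4 a1 a2 lam"
    and "gprimitive 4 a1"
    and "is_ggcd d2 (minors2 4 a1 a2)"
  shows "gdvd d2 (complex_of_real lam)"
proof -
  have lam: "lam > 0" and G1: "\<And>k. k < 4 \<Longrightarrow> a1 k \<in> gauss_int" and G2: "\<And>k. k < 4 \<Longrightarrow> a2 k \<in> gauss_int"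
    and c11: "cinner 4 a1 a1 = complex_of_real lam" and c22: "cinner 4 a2 a2 = complex_of_real lam"
    and c12: "cinner 4 a1 a2 = 0"
    using assms(1) unfolding icube2_def by auto
  have dG: "d2 \<in> gauss_int" using assms(3) unfolding is_ggcd_def by blast
  have dm: "gdvd d2 (a1 i * a2 j - a1 j * a2 i)" if "i < 4" "j < 4" for i j
  proof -
    consider "i < j" | "i = j" | "j < i" by linarith
    thus ?thesis
    proof cases
      case 1
      hence "a1 i * a2 j - a1 j * a2 i \<in> minors2 4 a1 a2" using that unfolding minors2_def by blast
      thus ?thesis using assms(3) unfolding is_ggcd_def by blast
    next
      case 2 thus ?thesis by (simp add: gdvd_0)
    next
      case 3
      hence "a1 j * a2 i - a1 i * a2 j \<in> minors2 4 a1 a2" using that unfolding minors2_def by blast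
      hence "gdvd d2 (a1 j * a2 i - a1 i * a2 j)" using assms(3) unfolding is_ggcd_def by blast
      from gdvd_uminus[OF this] show ?thesis by simp
    qed
  qed
  have c21: "cinner 4 a2 a1 = 0"
  proof -
    have "cinner 4 a2 a1 = cnj (cinner 4 a1 a2)" unfolding cinner_def by (simp add: mult.commute)
    thus ?thesis using c12 by simp
  qed
  have key: "gdvd d2 (complex_of_real lam * a1 j)" if j: "j < 4" for j
  proof -
    have "(\<Sum>i<4. cnj (a2 i) * (a1 i * a2 j - a1 j * a2 i))
        = a2 j * cinner 4 a2 a1 - a1 j * cinner 4 a2 a2"
      unfolding cinner_def by (simp add: sum_distrib_left sum_subtractf algebra_simps)
    also have "\<dots> = - (complex_of_real lam * a1 j)" using c21 c22 by simp
    finally have eq: "(\<Sum>i<4. cnj (a2 i) * (a1 i * a2 j - a1 j * a2 i)) = - (complex_of_real lam * a1 j)" .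
    have "gdvd d2 (\<Sum>i<4. cnj (a2 i) * (a1 i * a2 j - a1 j * a2 i))"
      by (rule gdvd_sum, rule gdvd_mult[OF dm], auto intro: gi_cnj G2 j)
    from gdvd_uminus[OF this[unfolded eq]] show ?thesis by simp
  qed
  define S where "S = {y \<in> gauss_int. gdvd d2 (complex_of_real lam * y)}"
  have nz: "\<exists>k<4. a1 k \<noteq> 0"
  proof (rule ccontr)
    assume "\<not> ?thesis"
    hence "cinner 4 a1 a1 = 0" unfolding cinner_def by simp
    with c11 lam show False by simp
  qed
  then obtain k0 where k0: "k0 < 4" "a1 k0 \<noteq> 0" by blast
  have "\<exists>u\<in>S. gunit u"
  proof (rule ideal_unit[OF _ _ _ _ k0 assms(2)])
    show "S \<subseteq> gauss_int" unfolding S_def by blast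
    show "x - y \<in> S" if "x \<in> S" "y \<in> S" for x y
      using that unfolding S_def by (auto intro: gi_diff simp: right_diff_distrib dest: gdvd_diff)
    show "c * x \<in> S" if "c \<in> gauss_int" "x \<in> S" for c x
      using that gdvd_mult[of d2 "complex_of_real lam * x" c] unfolding S_def
      by (auto intro: gi_mult simp: mult.left_commute)
    show "\<forall>k<4. a1 k \<in> S" using key G1 unfolding S_def by blast
  qed
  then obtain u where u: "u \<in> S" "gunit u" by blast
  from u(2) obtain c where c: "c \<in> gauss_int" "1 = u * c" unfolding gunit_def gdvd_def by blast
  have "gdvd d2 (c * (complex_of_real lam * u))" using u(1) c(1) unfolding S_def
    by (auto intro: gdvd_mult)
  moreover have "c * (complex_of_real lam * u) = complex_of_real lam" using c(2)
    by (metis mult.commute mult.left_commute mult.right_neutral)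
  ultimately show ?thesis by simp
qed

end
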